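(* Let $f:\mathbb{R}\to\mathbb{R}$ be twice continuously differentiable, and let $u_L<u_U$ with $f''>0$ on $(u_L,u_U)$ or $f''<0$ on $(u_L,u_U)$. Let $a$ be the nonlinear average defined below. (Merging) Let $x_1<x_2\le x_3<x_4$, let $x_{23}$ satisfy $x_2\le x_{23}\le x_3$, and let $u_1,u_2,u_3,u_4\in[u_L,u_U]$. Then there is at most one $u_{23}\in[u_L,u_U]$ satisfying $$(x_{23}-x_1)\,a(u_1,u_{23})+(x_4-x_{23})\,a(u_{23},u_4)=(x_2-x_1)\,a(u_1,u_2)+(x_3-x_2)\,a(u_2,u_3)+(x_4-x_3)\,a(u_3,u_4).$$ (Insertion) Let $x_2<x_{23}<x_3$ and $u_2,u_3\in[u_L,u_U]$. Then there is at most one $u_{23}\in[u_L,u_U]$ satisfying $$(x_{23}-x_2)\,a(u_2,u_{23})+(x_3-x_{23})\,a(u_{23},u_3)=(x_3-x_2)\,a(u_2,u_3).$$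
   Context: For $g:\mathbb{R}\to\mathbb{R}$ write $[g(u)]_{a}^{b}=g(b)-g(a)$. For $u_1\neq u_2$ the nonlinear average is $a(u_1,u_2)=\frac{[f'(u)u-f(u)]_{u_1}^{u_2}}{[f'(u)]_{u_1}^{u_2}}=\frac{\int_{u_1}^{u_2}f''(u)u\,\mathrm{d}u}{\int_{u_1}^{u_2}f''(u)\,\mathrm{d}u}$, and $a(u,u)=u$. Here $(x_i,u_i)$ are particles (positions and solution values) in a particle method for $u_t+(f(u))_x=0$, and $(x_{23},u_{23})$ is the particle replacing particles 2 and 3 (merging) or inserted between them (insertion). *)

theory Defs
  imports "HOL-Analysis.Analysis"
begin

definition nl_avg :: "(real \<Rightarrow> real) \<Rightarrow> real \<Rightarrow> real \<Rightarrow> real" where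
  "nl_avg f u1 u2 =
     (if u1 = u2 then u1
      else ((deriv f u2 * u2 - f u2) - (deriv f u1 * u1 - f u1)) / (deriv f u2 - deriv f u1))"

end

theory Submission
  imports Defs
begin

lemma nl_avg_sym: "nl_avg f u v = nl_avg f v u"
proof -
  have "\<And>a b::real. a / b = (-a) / (-b)" by simp
  then show ?thesis unfolding nl_avg_def by (metis minus_diff_eq)
qed

lemma nl_avg_neg:
  assumes d1: "\<And>x. (f has_real_derivative f' x) (at x)"
  shows "nl_avg (\<lambda>x. - f x) u v = nl_avg f u v"
proof -
  have "((\<lambda>x. - f x) has_real_derivative - f' x) (at x)" for x
    using d1 by (intro derivative_intros)
  then have "deriv (\<lambda>x. - f x) = (\<lambda>x. - f' x)" using DERIV_imp_deriv by blast
  moreover have "deriv f = f'" using d1 DERIV_imp_deriv by blast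
  ultimately show ?thesis unfolding nl_avg_def
    by (simp add: algebra_simps) (metis minus_diff_eq minus_divide_divide)
qed

lemma mono_pos:
  fixes f f' f'' :: "real \<Rightarrow> real" and uL uU :: real
  assumes d1: "\<And>x. (f has_real_derivative f' x) (at x)"
    and d2: "\<And>x. (f' has_real_derivative f'' x) (at x)"
    and pos: "\<forall>u\<in>{uL<..<uU}. f'' u > 0"
    and u: "u \<in> {uL..uU}" and v1: "v1 \<in> {uL..uU}" and v2: "v2 \<in> {uL..uU}" and lt: "v1 < v2"
  shows "nl_avg f u v1 < nl_avg f u v2"
proof -
  define F where "F x = f' x * x - f x" for x
  define S where "S p q = (F q - F p) / (f' q - f' p)" for p q
  have dF: "(F has_real_derivative f'' x * x) (at x)" for x
  proof -
    have "((\<lambda>x. f' x * x - f x) has_real_derivative f'' x * x + 1 * f' x - f' x) (at x)"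
      by (intro DERIV_diff DERIV_mult d1 d2 DERIV_ident)
    then show ?thesis unfolding F_def by simp
  qed
  have incr: "f' p < f' q" if hh: "uL \<le> p" "p < q" "q \<le> uU" for p q
  proof -
    obtain c where c: "p < c" "c < q" "f' q - f' p = (q - p) * f'' c"
      using MVT2[of p q f' f''] d2 hh(2) by blast
    have "f'' c > 0" using pos c hh by auto
    then show ?thesis using c hh by (simp add: algebra_simps) (metis diff_gt_0_iff_gt mult_pos_pos c(3) hh(2))
  qed
  have between: "p < S p q \<and> S p q < q" if hh: "uL \<le> p" "p < q" "q \<le> uU" for p q
  proof -
    obtain c where c: "p < c" "c < q" "(F q - F p) * f'' c = (f' q - f' p) * (f'' c * c)"
      using GMVT'[of p q F f' f'' "\<lambda>x. f'' x * x", OF hh(2) DERIV_isCont[OF dF] DERIV_isCont[OF d2] d2 dF]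
      by blast
    have "f'' c > 0" using pos c hh by auto
    moreover have "(F q - F p - (f' q - f' p) * c) * f'' c = 0" using c(3) by (simp add: algebra_simps)
    ultimately have "F q - F p = (f' q - f' p) * c" by simp
    moreover have "f' q - f' p > 0" using incr hh by simp
    ultimately have "S p q = c" unfolding S_def by simp
    then show ?thesis using c by simp
  qed
  have three: "S p q < S p r \<and> S p r < S q r" if hh: "uL \<le> p" "p < q" "q < r" "r \<le> uU" for p q r
  proof -
    define A where "A = f' q - f' p"
    define B where "B = f' r - f' q"
    have A: "A > 0" unfolding A_def using incr hh by simp
    have B: "B > 0" unfolding B_def using incr hh by simp
    have h1: "S p q < S q r" using between[of p q] between[of q r] hh by simp
    have e1: "F q - F p = A * S p q" unfolding S_def A_def using A A_def by simp
    have e2: "F r - F q = B * S q r" unfolding S_def B_def using B B_def by simp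
    have e3: "S p r = (A * S p q + B * S q r) / (A + B)"
    proof -
      have "F r - F p = A * S p q + B * S q r" using e1 e2 by simp
      moreover have "f' r - f' p = A + B" using A_def B_def by simp
      ultimately show ?thesis unfolding S_def[of p r] by simp
    qed
    show ?thesis unfolding e3 using A B h1
      by (simp add: field_simps)
  qed
  have Ssym: "S p q = S q p" for p q
    unfolding S_def by (metis minus_diff_eq minus_divide_divide)
  have df: "deriv f = f'" using d1 DERIV_imp_deriv by blast
  have avg: "nl_avg f u v = (if u = v then u else S u v)" for v
    unfolding nl_avg_def df S_def F_def by simp
  show ?thesis
  proof -
    consider "v2 < u" | "v2 = u" | "v1 < u \<and> u < v2" | "v1 = u" | "u < v1" using lt by linarith
    then show ?thesis
    proof cases
      case 1 then show ?thesis unfolding avg using three[of v1 v2 u] u v1 v2 lt Ssym by auto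
    next
      case 2 then show ?thesis unfolding avg using between[of v1 u] u v1 v2 lt Ssym by auto
    next
      case 3 then show ?thesis unfolding avg using between[of v1 u] between[of u v2] u v1 v2 lt Ssym by auto
    next
      case 4 then show ?thesis unfolding avg using between[of u v2] u v1 v2 lt Ssym by auto
    next
      case 5 then show ?thesis unfolding avg using three[of u v1 v2] u v1 v2 lt Ssym by auto
    qed
  qed
qed

theorem lemma2:
  fixes f f' f'' :: "real \<Rightarrow> real" and uL uU :: real
  assumes d1: "\<And>x. (f has_real_derivative f' x) (at x)"
    and d2: "\<And>x. (f' has_real_derivative f'' x) (at x)"
    and c2: "continuous_on UNIV f''"
    and lt: "uL < uU"
    and convex_or_concave: "(\<forall>u\<in>{uL<..<uU}. f'' u > 0) \<or> (\<forall>u\<in>{uL<..<uU}. f'' u < 0)"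
  shows "(\<forall>x1 x2 x3 x4 x23 u1 u2 u3 u4.
            x1 < x2 \<and> x2 \<le> x3 \<and> x3 < x4 \<and> x2 \<le> x23 \<and> x23 \<le> x3 \<and>
            u1 \<in> {uL..uU} \<and> u2 \<in> {uL..uU} \<and> u3 \<in> {uL..uU} \<and> u4 \<in> {uL..uU} \<longrightarrow>
            (\<forall>v\<in>{uL..uU}. \<forall>w\<in>{uL..uU}.
               (x23 - x1) * nl_avg f u1 v + (x4 - x23) * nl_avg f v u4 =
                 (x2 - x1) * nl_avg f u1 u2 + (x3 - x2) * nl_avg f u2 u3 + (x4 - x3) * nl_avg f u3 u4 \<and>
               (x23 - x1) * nl_avg f u1 w + (x4 - x23) * nl_avg f w u4 =
                 (x2 - x1) * nl_avg f u1 u2 + (x3 - x2) * nl_avg f u2 u3 + (x4 - x3) * nl_avg f u3 u4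
               \<longrightarrow> v = w))
       \<and>
         (\<forall>x2 x3 x23 u2 u3.
            x2 < x23 \<and> x23 < x3 \<and> u2 \<in> {uL..uU} \<and> u3 \<in> {uL..uU} \<longrightarrow>
            (\<forall>v\<in>{uL..uU}. \<forall>w\<in>{uL..uU}.
               (x23 - x2) * nl_avg f u2 v + (x3 - x23) * nl_avg f v u3 = (x3 - x2) * nl_avg f u2 u3 \<and>
               (x23 - x2) * nl_avg f u2 w + (x3 - x23) * nl_avg f w u3 = (x3 - x2) * nl_avg f u2 u3
               \<longrightarrow> v = w))"
proof -
  have mono: "nl_avg f u v1 < nl_avg f u v2"
    if u: "u \<in> {uL..uU}" and v1: "v1 \<in> {uL..uU}" and v2: "v2 \<in> {uL..uU}" and l: "v1 < v2" for u v1 v2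
  proof (cases "\<forall>u\<in>{uL<..<uU}. f'' u > 0")
    case True
    show ?thesis by (rule mono_pos[OF d1 d2 True u v1 v2 l])
  next
    case False
    then have neg: "\<forall>u\<in>{uL<..<uU}. - f'' u > 0" using convex_or_concave by auto
    have n1: "((\<lambda>x. - f x) has_real_derivative - f' x) (at x)" for x
      using d1 by (intro derivative_intros)
    have n2: "((\<lambda>x. - f' x) has_real_derivative - f'' x) (at x)" for x
      using d2 by (intro derivative_intros)
    show ?thesis using mono_pos[OF n1 n2 neg u v1 v2 l] nl_avg_neg[OF d1] by simp
  qed
  have key: "v = w" if p: "P > 0" "Q > 0" and v: "v \<in> {uL..uU}" and w: "w \<in> {uL..uU}"
    and a: "a \<in> {uL..uU}" and b: "b \<in> {uL..uU}"
    and e: "P * nl_avg f a v + Q * nl_avg f v b = P * nl_avg f a w + Q * nl_avg f w b" for P Q v w a b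
  proof (rule ccontr)
    assume "v \<noteq> w"
    then consider "v < w" | "w < v" by linarith
    then show False
    proof cases
      case 1
      have "nl_avg f a v < nl_avg f a w" "nl_avg f b v < nl_avg f b w"
        using mono 1 v w a b by auto
      then show False using e p nl_avg_sym[of f v b] nl_avg_sym[of f w b]
        by (smt (verit) mult_strict_left_mono)
    next
      case 1: 2
      have "nl_avg f a w < nl_avg f a v" "nl_avg f b w < nl_avg f b v"
        using mono 1 v w a b by auto
      then show False using e p nl_avg_sym[of f v b] nl_avg_sym[of f w b]
        by (smt (verit) mult_strict_left_mono)
    qed
  qed
  show ?thesis
  proof (intro conjI allI impI ballI)
    fix x1 x2 x3 x4 x23 u1 u2 u3 u4 v w
    assume h: "x1 < x2 \<and> x2 \<le> x3 \<and> x3 < x4 \<and> x2 \<le> x23 \<and> x23 \<le> x3 \<and>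
            u1 \<in> {uL..uU} \<and> u2 \<in> {uL..uU} \<and> u3 \<in> {uL..uU} \<and> u4 \<in> {uL..uU}"
      and vw: "v \<in> {uL..uU}" "w \<in> {uL..uU}"
      and e: "(x23 - x1) * nl_avg f u1 v + (x4 - x23) * nl_avg f v u4 =
                 (x2 - x1) * nl_avg f u1 u2 + (x3 - x2) * nl_avg f u2 u3 + (x4 - x3) * nl_avg f u3 u4 \<and>
               (x23 - x1) * nl_avg f u1 w + (x4 - x23) * nl_avg f w u4 =
                 (x2 - x1) * nl_avg f u1 u2 + (x3 - x2) * nl_avg f u2 u3 + (x4 - x3) * nl_avg f u3 u4"
    show "v = w"
      by (rule key[of "x23 - x1" "x4 - x23" v w u1 u4]) (use h vw e in auto)
  next
    fix x2 x3 x23 u2 u3 v w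
    assume h: "x2 < x23 \<and> x23 < x3 \<and> u2 \<in> {uL..uU} \<and> u3 \<in> {uL..uU}"
      and vw: "v \<in> {uL..uU}" "w \<in> {uL..uU}"
      and e: "(x23 - x2) * nl_avg f u2 v + (x3 - x23) * nl_avg f v u3 = (x3 - x2) * nl_avg f u2 u3 \<and>
               (x23 - x2) * nl_avg f u2 w + (x3 - x23) * nl_avg f w u3 = (x3 - x2) * nl_avg f u2 u3"
    show "v = w"
      by (rule key[of "x23 - x2" "x3 - x23" v w u2 u3]) (use h vw e in auto)
  qed
qed

end
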